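(* Let $(M^{2n},J,g)$ be a Hermitian manifold, $o\in M$, and $e_1,\dots,e_n$ a basis of $T^{1,0}_oM$. Then there is a local holomorphic coordinate $(z^1,\dots,z^n)$ at $o$ such that $z(o)=0$, $e_i=\frac{\partial}{\partial z^i}\big|_o$ for all $i$, $\tilde\Gamma_{ij}^k(o)=\Gamma_{ij}^k(o)+\tfrac12\tau_{ij}^k(o)=\tfrac12(\Gamma_{ij}^k+\Gamma_{ji}^k)(o)=0$ for all $i,j,k$, and $\partial_i\tilde\Gamma_{jk}^l(o)X^iX^jX^k=\partial_i\Gamma_{jk}^l(o)X^iX^jX^k=0$ for all $l$ and all $X\in\mathbb C^n$ (summation over $i,j,k$).
   Context: A Hermitian manifold is a complex manifold (integrable $J$) with a Riemannian metric $g$ satisfying $g(JX,JY)=g(X,Y)$. The Chern connection $D$ is the unique connection with $DJ=0$, $Dg=0$ whose torsion $\tau(X,Y)=D_XY-D_YX-[X,Y]$ has vanishing $(1,1)$-part. In holomorphic coordinates, with $\partial_i=\partial/\partial z^i$, $D_{\partial_j}\partial_i=\Gamma_{ij}^k\partial_k$ defines the Chern Christoffel symbols $\Gamma_{ij}^k$, and $\tau(\partial_i,\partial_j)=\tau_{ij}^k\partial_k$, so $\tau_{ij}^k=\Gamma_{ji}^k-\Gamma_{ij}^k$; $\tilde\Gamma_{ij}^k:=\Gamma_{ij}^k+\tfrac12\tau_{ij}^k$. Summation over repeated indices. *)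

theory Defs
  imports "HOL-Analysis.Analysis"
begin

text \<open>Everything is local: a holomorphic chart of the Hermitian manifold around the
point o identifies a neighbourhood of o with an open set U of complex^'n.
The Hermitian metric is represented by its matrix h z with entries
h z $ i $ j = g(d/dz^i, d/dzbar^j) (complex bilinear extension of g).\<close>

definition ddir :: "'a::real_normed_vector \<Rightarrow> ('a \<Rightarrow> 'b::real_normed_vector) \<Rightarrow> 'a \<Rightarrow> 'b" where
  "ddir v f = (\<lambda>x. frechet_derivative f (at x) v)"

definition smooth_on :: "'a::real_normed_vector set \<Rightarrow> ('a \<Rightarrow> 'b::real_normed_vector) \<Rightarrow> bool" where
  "smooth_on S f \<longleftrightarrow>
     (\<forall>vs. continuous_on S (foldr ddir vs f) \<and> (\<forall>x\<in>S. foldr ddir vs f differentiable (at x)))"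

definition wirt :: "'n::finite \<Rightarrow> (complex^'n \<Rightarrow> complex) \<Rightarrow> complex^'n \<Rightarrow> complex" where
  "wirt j f x = (frechet_derivative f (at x) (axis j 1)
                 - \<i> * frechet_derivative f (at x) (axis j \<i>)) / 2"

definition holo_on :: "(complex^'n::finite) set \<Rightarrow> (complex^'n \<Rightarrow> complex^'m::finite) \<Rightarrow> bool" where
  "holo_on S F \<longleftrightarrow> (\<forall>z\<in>S. \<exists>A::complex^'n^'m. (F has_derivative (\<lambda>v. A *v v)) (at z))"

definition hermitian_metric_on :: "(complex^'n::finite) set \<Rightarrow> (complex^'n \<Rightarrow> complex^'n^'n) \<Rightarrow> bool" where
  "hermitian_metric_on U h \<longleftrightarrow>
     (\<forall>i j. smooth_on U (\<lambda>z. h z $ i $ j)) \<and>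
     (\<forall>z\<in>U. \<forall>i j. h z $ j $ i = cnj (h z $ i $ j)) \<and>
     (\<forall>z\<in>U. \<forall>v. v \<noteq> 0 \<longrightarrow> Re (\<Sum>i\<in>UNIV. \<Sum>j\<in>UNIV. v $ i * h z $ i $ j * cnj (v $ j)) > 0)"

text \<open>Chern Christoffel symbols: D_{d_j} d_i = Gamma_ij^k d_k,
Gamma_ij^k = (d_j h_{i lbar}) h^{lbar k}.\<close>
definition chern_Gamma :: "(complex^'n::finite \<Rightarrow> complex^'n^'n) \<Rightarrow> 'n \<Rightarrow> 'n \<Rightarrow> 'n \<Rightarrow> complex^'n \<Rightarrow> complex" where
  "chern_Gamma h i j k z = (\<Sum>l\<in>UNIV. wirt j (\<lambda>w. h w $ i $ l) z * matrix_inv (h z) $ l $ k)"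

definition chern_tau :: "(complex^'n::finite \<Rightarrow> complex^'n^'n) \<Rightarrow> 'n \<Rightarrow> 'n \<Rightarrow> 'n \<Rightarrow> complex^'n \<Rightarrow> complex" where
  "chern_tau h i j k z = chern_Gamma h j i k z - chern_Gamma h i j k z"

definition chern_Gamma_tilde :: "(complex^'n::finite \<Rightarrow> complex^'n^'n) \<Rightarrow> 'n \<Rightarrow> 'n \<Rightarrow> 'n \<Rightarrow> complex^'n \<Rightarrow> complex" where
  "chern_Gamma_tilde h i j k z = chern_Gamma h i j k z + chern_tau h i j k z / 2"

text \<open>Pull-back of the metric matrix under a holomorphic coordinate change
F (new coordinates w \<mapsto> old coordinates F w):
g'_{i jbar}(w) = sum_{k,l} d_i F^k(w) h_{k lbar}(F w) conj(d_j F^l(w)).\<close>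
definition pullback_metric :: "(complex^'n::finite \<Rightarrow> complex^'n) \<Rightarrow> (complex^'n \<Rightarrow> complex^'n^'n) \<Rightarrow> complex^'n \<Rightarrow> complex^'n^'n" where
  "pullback_metric F h w = (\<chi> i j. \<Sum>k\<in>UNIV. \<Sum>l\<in>UNIV.
      wirt i (\<lambda>u. F u $ k) w * h (F w) $ k $ l * cnj (wirt j (\<lambda>u. F u $ l) w))"

end

theory Submission
  imports Defs
begin


definition delL :: "(complex^'n::finite \<Rightarrow> complex) \<Rightarrow> complex^'n \<Rightarrow> complex" where
  "delL L v = (L v - \<i> * L (\<i> *s v)) / 2"

lemma sRc: "r *\<^sub>R (z::complex) = of_real r * z" by (simp add: scaleR_conv_of_real)

lemma axis_i: "axis j \<i> = \<i> *s (axis j 1 :: complex^'n::finite)"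
  by (simp add: vec_eq_iff axis_def)

lemma wirt_delL: "wirt j f x = delL (frechet_derivative f (at x)) (axis j 1)"
  by (simp add: wirt_def delL_def axis_i)

lemma wirt_hasD: "(f has_derivative f') (at x) \<Longrightarrow> wirt j f x = delL f' (axis j 1)"
  by (metis frechet_derivative_at wirt_delL)

lemma scaleC_decomp: "(c::complex) *s (v::complex^'n::finite) = Re c *\<^sub>R v + Im c *\<^sub>R (\<i> *s v)"
proof -
  have "c * z = of_real (Re c) * z + of_real (Im c) * (\<i> * z)" for z
    by (subst complex_eq[of c]) (simp add: algebra_simps)
  then show ?thesis unfolding vec_eq_iff by (simp add: sRc)
qed

lemma ii_s: "\<i> *s (\<i> *s (v::complex^'n::finite)) = - v"
  by (simp add: vec_eq_iff)

lemma i_s_add: "\<i> *s ((u::complex^'n::finite) + v) = \<i> *s u + \<i> *s v"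
  by (simp add: vec_eq_iff algebra_simps)

lemma i_s_scaleR: "\<i> *s (r *\<^sub>R (u::complex^'n::finite)) = r *\<^sub>R (\<i> *s u)"
  unfolding vec_eq_iff by (simp add: sRc)

lemma delL_scale:
  fixes L :: "complex^'n::finite \<Rightarrow> complex"
  assumes L: "linear L"
  shows "delL L (c *s v) = c * delL L v"
proof -
  have 1: "L (c *s v) = Re c *\<^sub>R L v + Im c *\<^sub>R L (\<i> *s v)"
    by (subst scaleC_decomp) (simp only: linear_add[OF L] linear_scale[OF L])
  have 2: "L (\<i> *s (c *s v)) = Re c *\<^sub>R L (\<i> *s v) - Im c *\<^sub>R L v"
  proof -
    have "\<i> *s (c *s v) = Re c *\<^sub>R (\<i> *s v) - Im c *\<^sub>R v"
      by (subst scaleC_decomp) (simp only: i_s_add i_s_scaleR ii_s scaleR_minus_right diff_conv_add_uminus)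
    then show ?thesis by (simp only: linear_diff[OF L] linear_scale[OF L])
  qed
  have c: "c = of_real (Re c) + \<i> * of_real (Im c)" by (simp add: complex_eq_iff)
  have e: "(a *\<^sub>R (x::complex) + b *\<^sub>R y - \<i> * (a *\<^sub>R y - b *\<^sub>R x)) / 2
       = (of_real a + \<i> * of_real b) * ((x - \<i> * y) / 2)" for a b x y
    by (simp add: scaleR_conv_of_real algebra_simps)
  show ?thesis
    unfolding delL_def 1 2 e by (simp only: c[symmetric])
qed

lemma delL_linear:
  fixes L :: "complex^'n::finite \<Rightarrow> complex"
  assumes L: "linear L" shows "linear (delL L)"
proof (rule linearI)
  fix u v :: "complex^'n" and r :: real
  show "delL L (u + v) = delL L u + delL L v"
    by (simp add: delL_def i_s_add linear_add[OF L] field_simps)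
  show "delL L (r *\<^sub>R u) = r *\<^sub>R delL L u"
  proof -
    have e: "(r *\<^sub>R (a::complex) - \<i> * (r *\<^sub>R b))/2 = r *\<^sub>R ((a - \<i>*b)/2)" for a b
      by (simp add: scaleR_conv_of_real algebra_simps)
    show ?thesis unfolding delL_def i_s_scaleR linear_scale[OF L] e ..
  qed
qed

lemma delL_sum:
  fixes L :: "complex^'n::finite \<Rightarrow> complex"
  assumes L: "linear L"
  shows "(\<Sum>j\<in>UNIV. delL L (axis j 1) * X$j) = delL L X"
proof -
  have "delL L X = delL L (\<Sum>j\<in>UNIV. X $ j *s axis j 1)" by (simp only: basis_expansion)
  also have "\<dots> = (\<Sum>j\<in>UNIV. delL L (X $ j *s axis j 1))"
    by (rule linear_sum[OF delL_linear[OF L]])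
  also have "\<dots> = (\<Sum>j\<in>UNIV. delL L (axis j 1) * X$j)"
    by (rule sum.cong) (simp_all only: delL_scale[OF L] mult.commute)
  finally show ?thesis by simp
qed

lemma wirt_sumX:
  fixes f :: "complex^'n::finite \<Rightarrow> complex"
  assumes "f differentiable (at x)"
  shows "(\<Sum>j\<in>UNIV. wirt j f x * X$j) = delL (frechet_derivative f (at x)) X"
proof -
  have "linear (frechet_derivative f (at x))"
    using assms frechet_derivative_works has_derivative_linear by blast
  from delL_sum[OF this, of X] show ?thesis by (simp only: wirt_delL)
qed


lemma wirt_add:
  fixes f g :: "complex^'n::finite \<Rightarrow> complex"
  assumes "f differentiable (at x)" "g differentiable (at x)"
  shows "wirt j (\<lambda>x. f x + g x) x = wirt j f x + wirt j g x"
proof -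
  have "((\<lambda>x. f x + g x) has_derivative (\<lambda>h. frechet_derivative f (at x) h + frechet_derivative g (at x) h)) (at x)"
    using assms by (intro has_derivative_add) (simp_all add: frechet_derivative_works[symmetric])
  note H = this
  show ?thesis unfolding wirt_hasD[OF H] unfolding wirt_delL delL_def by (simp add: field_simps)
qed

lemma wirt_diff:
  fixes f g :: "complex^'n::finite \<Rightarrow> complex"
  assumes "f differentiable (at x)" "g differentiable (at x)"
  shows "wirt j (\<lambda>x. f x - g x) x = wirt j f x - wirt j g x"
proof -
  have "((\<lambda>x. f x - g x) has_derivative (\<lambda>h. frechet_derivative f (at x) h - frechet_derivative g (at x) h)) (at x)"
    using assms by (intro has_derivative_diff) (simp_all add: frechet_derivative_works[symmetric])
  note H = this
  show ?thesis unfolding wirt_hasD[OF H] unfolding wirt_delL delL_def by (simp add: field_simps)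
qed

lemma wirt_mult:
  fixes f g :: "complex^'n::finite \<Rightarrow> complex"
  assumes "f differentiable (at x)" "g differentiable (at x)"
  shows "wirt j (\<lambda>x. f x * g x) x = wirt j f x * g x + f x * wirt j g x"
proof -
  have "((\<lambda>x. f x * g x) has_derivative (\<lambda>h. f x * frechet_derivative g (at x) h + frechet_derivative f (at x) h * g x)) (at x)"
    using assms by (intro has_derivative_mult) (simp_all add: frechet_derivative_works[symmetric])
  note H = this
  show ?thesis unfolding wirt_hasD[OF H] unfolding wirt_delL delL_def by (simp add: field_simps)
qed

lemma wirt_const: "wirt j (\<lambda>x. c) x = 0"
  by (simp add: wirt_hasD[OF has_derivative_const] delL_def)

lemma wirt_coord: "wirt j (\<lambda>x::complex^'n::finite. x $ k) x = (if j = k then 1 else 0)"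
  by (simp add: wirt_hasD[OF bounded_linear.has_derivative[OF bounded_linear_vec_nth has_derivative_ident]]
      delL_def axis_def)

lemma wirt_cmult:
  fixes f :: "complex^'n::finite \<Rightarrow> complex"
  assumes "f differentiable (at x)"
  shows "wirt j (\<lambda>x. c * f x) x = c * wirt j f x"
  using wirt_mult[of "\<lambda>x. c" x f j] assms by (simp add: wirt_const)

lemma wirt_sum:
  fixes f :: "'i \<Rightarrow> complex^'n::finite \<Rightarrow> complex"
  assumes "finite I" "\<And>i. i \<in> I \<Longrightarrow> f i differentiable (at x)"
  shows "wirt j (\<lambda>x. \<Sum>i\<in>I. f i x) x = (\<Sum>i\<in>I. wirt j (f i) x)"
  using assms
proof (induction I rule: finite_induct)
  case empty
  then show ?case by (simp add: wirt_const)
next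
  case (insert a I)
  have "wirt j (\<lambda>x. f a x + (\<Sum>i\<in>I. f i x)) x = wirt j (f a) x + wirt j (\<lambda>x. \<Sum>i\<in>I. f i x) x"
    using insert by (intro wirt_add) auto
  then show ?case using insert by simp
qed

definition holo_at :: "(complex^'n::finite \<Rightarrow> complex) \<Rightarrow> complex^'n \<Rightarrow> bool" where
  "holo_at f x \<longleftrightarrow> f differentiable (at x) \<and>
     (\<forall>v. frechet_derivative f (at x) (\<i> *s v) = \<i> * frechet_derivative f (at x) v)"

lemma holo_atI:
  assumes "(f has_derivative f') (at x)" "\<And>v. f' (\<i> *s v) = \<i> * f' v"
  shows "holo_at f x"
  using assms frechet_derivative_at[OF assms(1)] unfolding holo_at_def differentiable_def by auto

lemma holo_at_diff: "holo_at f x \<Longrightarrow> f differentiable (at x)"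
  by (simp add: holo_at_def)

lemma holo_const: "holo_at (\<lambda>x. c) x"
  by (rule holo_atI[OF has_derivative_const]) simp

lemma holo_coord: "holo_at (\<lambda>x::complex^'n::finite. x $ k) x"
  by (rule holo_atI[OF bounded_linear.has_derivative[OF bounded_linear_vec_nth has_derivative_ident]]) simp

lemma holo_add: assumes "holo_at f x" "holo_at g x" shows "holo_at (\<lambda>x. f x + g x) x"
proof -
  have "((\<lambda>x. f x + g x) has_derivative (\<lambda>h. frechet_derivative f (at x) h + frechet_derivative g (at x) h)) (at x)"
    using assms by (intro has_derivative_add) (simp_all add: holo_at_def frechet_derivative_works[symmetric])
  then show ?thesis by (rule holo_atI) (use assms in \<open>simp add: holo_at_def algebra_simps\<close>)
qed

lemma holo_mult: assumes "holo_at f x" "holo_at g x" shows "holo_at (\<lambda>x. f x * g x) x"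
proof -
  have "((\<lambda>x. f x * g x) has_derivative (\<lambda>h. f x * frechet_derivative g (at x) h + frechet_derivative f (at x) h * g x)) (at x)"
    using assms by (intro has_derivative_mult) (simp_all add: holo_at_def frechet_derivative_works[symmetric])
  then show ?thesis by (rule holo_atI) (use assms in \<open>simp add: holo_at_def algebra_simps\<close>)
qed

lemma holo_sum:
  assumes "finite I" "\<And>i. i \<in> I \<Longrightarrow> holo_at (f i) x"
  shows "holo_at (\<lambda>x. \<Sum>i\<in>I. f i x) x"
  using assms
proof (induction I rule: finite_induct)
  case empty
  then show ?case by (simp add: holo_const)
next
  case (insert a I)
  then show ?case by (simp add: holo_add)
qed

lemma holo_D:
  assumes "holo_at f x"
  shows "frechet_derivative f (at x) v = (\<Sum>j\<in>UNIV. wirt j f x * v$j)"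
proof -
  have "(\<Sum>j\<in>UNIV. wirt j f x * v$j) = delL (frechet_derivative f (at x)) v"
    using assms by (simp add: holo_at_def wirt_sumX)
  also have "\<dots> = frechet_derivative f (at x) v"
    using assms by (simp add: holo_at_def delL_def)
  finally show ?thesis by simp
qed

lemma wirt_cnj:
  assumes "holo_at g x"
  shows "wirt j (\<lambda>x. cnj (g x)) x = 0"
proof -
  have "((\<lambda>x. cnj (g x)) has_derivative (\<lambda>h. cnj (frechet_derivative g (at x) h))) (at x)"
    using assms by (intro bounded_linear.has_derivative[OF bounded_linear_cnj])
      (simp add: holo_at_def frechet_derivative_works[symmetric])
  note H = this
  show ?thesis unfolding wirt_hasD[OF H] delL_def using assms by (simp add: holo_at_def)
qed

lemma bounded_linear_axis: "bounded_linear (\<lambda>c::complex. axis m c :: complex^'n::finite)"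
proof (rule bounded_linear_intro[where K=1])
  show "axis m (x + y) = axis m x + (axis m y :: complex^'n)" for x y
    by (simp add: vec_eq_iff axis_def)
  show "axis m (r *\<^sub>R x) = r *\<^sub>R (axis m x :: complex^'n)" for r x
    by (simp add: vec_eq_iff axis_def)
  show "norm (axis m x :: complex^'n) \<le> norm x * 1" for x
  proof -
    have "norm (axis m x :: complex^'n) \<le> (\<Sum>i\<in>UNIV. norm ((axis m x :: complex^'n) $ i))"
      unfolding norm_vec_def by (rule L2_set_le_sum) simp
    also have "\<dots> = (\<Sum>i\<in>UNIV. if i = m then norm x else 0)"
      by (rule sum.cong) (auto simp: axis_def)
    also have "\<dots> = norm x" by simp
    finally show ?thesis by simp
  qed
qed

lemma vec_hasD:
  fixes F :: "complex^'n::finite \<Rightarrow> complex^'m::finite"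
  assumes "\<And>m. ((\<lambda>w. F w $ m) has_derivative f' m) (at x)"
  shows "(F has_derivative (\<lambda>v. \<chi> m. f' m v)) (at x)"
proof -
  have eq: "F = (\<lambda>w. \<Sum>m\<in>UNIV. axis m (F w $ m))"
    by (rule ext) (simp add: vec_eq_iff axis_def)
  have eq2: "(\<lambda>v. \<chi> m. f' m v) = (\<lambda>v. \<Sum>m\<in>UNIV. axis m (f' m v))"
    by (rule ext) (simp add: vec_eq_iff axis_def)
  show ?thesis
    unfolding eq2 by (subst eq, intro has_derivative_sum bounded_linear.has_derivative[OF bounded_linear_axis] assms)
qed


lemma mvmult_i: "(A::complex^'n::finite^'m::finite) *v (\<i> *s v) = \<i> *s (A *v v)"
  by (simp add: vec_eq_iff matrix_vector_mult_def sum_distrib_left mult.left_commute)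

lemma mvmult_axis: "((A::complex^'n::finite^'m::finite) *v axis i 1) $ m = A $ m $ i"
  by (simp add: matrix_vector_mult_def axis_def if_distrib cong: if_cong)

lemma vec_holo_hasD:
  fixes F :: "complex^'n::finite \<Rightarrow> complex^'m::finite"
  assumes "\<And>m. holo_at (\<lambda>w. F w $ m) x"
  shows "(F has_derivative (\<lambda>v. (\<chi> m i. wirt i (\<lambda>w. F w $ m) x) *v v)) (at x)"
proof -
  have "(F has_derivative (\<lambda>v. \<chi> m. frechet_derivative (\<lambda>w. F w $ m) (at x) v)) (at x)"
    by (rule vec_hasD) (use assms in \<open>simp add: holo_at_def frechet_derivative_works[symmetric]\<close>)
  moreover have "(\<lambda>v. \<chi> m. frechet_derivative (\<lambda>w. F w $ m) (at x) v)
      = (\<lambda>v. (\<chi> m i. wirt i (\<lambda>w. F w $ m) x) *v v)"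
    by (rule ext) (simp add: vec_eq_iff holo_D[OF assms] matrix_vector_mult_def)
  ultimately show ?thesis by simp
qed

lemma wirt_chain:
  fixes F :: "complex^'n::finite \<Rightarrow> complex^'n"
  assumes hol: "\<And>m. holo_at (\<lambda>w. F w $ m) x" and fd: "f differentiable (at (F x))"
  shows "wirt i (\<lambda>w. f (F w)) x = (\<Sum>m\<in>UNIV. wirt i (\<lambda>w. F w $ m) x * wirt m f (F x))"
proof -
  define A where "A = (\<chi> m i. wirt i (\<lambda>w. F w $ m) x)"
  have H: "(F has_derivative (\<lambda>v. A *v v)) (at x)"
    unfolding A_def by (rule vec_holo_hasD[OF hol])
  have H2: "((\<lambda>w. f (F w)) has_derivative (\<lambda>v. frechet_derivative f (at (F x)) (A *v v))) (at x)"
    using has_derivative_compose[OF H, of f "frechet_derivative f (at (F x))"] fd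
    by (simp add: frechet_derivative_works[symmetric] o_def)
  have "wirt i (\<lambda>w. f (F w)) x = delL (frechet_derivative f (at (F x))) (A *v axis i 1)"
    unfolding wirt_hasD[OF H2] delL_def mvmult_i ..
  also have "\<dots> = (\<Sum>m\<in>UNIV. wirt m f (F x) * (A *v axis i 1) $ m)"
    by (rule wirt_sumX[OF fd, symmetric])
  also have "\<dots> = (\<Sum>m\<in>UNIV. wirt i (\<lambda>w. F w $ m) x * wirt m f (F x))"
    by (simp add: mvmult_axis A_def mult.commute)
  finally show ?thesis .
qed




lemma matrix_inv_works:
  fixes A :: "'a::field^'n::finite^'n"
  assumes "invertible A"
  shows "A ** matrix_inv A = mat 1" "matrix_inv A ** A = mat 1"
proof -
  have "\<exists>A'. A ** A' = mat 1 \<and> A' ** A = mat 1" using assms by (simp add: invertible_def)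
  then have "A ** matrix_inv A = mat 1 \<and> matrix_inv A ** A = mat 1"
    unfolding matrix_inv_def by (rule someI_ex)
  then show "A ** matrix_inv A = mat 1" "matrix_inv A ** A = mat 1" by auto
qed

lemma det_differentiable:
  fixes A :: "'a::real_normed_vector \<Rightarrow> complex^'n::finite^'n"
  assumes "\<And>i j. (\<lambda>x. A x $ i $ j) differentiable (at x0)"
  shows "(\<lambda>x. det (A x)) differentiable (at x0)"
proof -
  have pd: "(\<lambda>x. \<Prod>i\<in>UNIV. A x $ i $ p i) differentiable (at x0)" for p :: "'n \<Rightarrow> 'n"
    using has_derivative_prod[of UNIV "\<lambda>i x. A x $ i $ p i" "\<lambda>i. frechet_derivative (\<lambda>x. A x $ i $ p i) (at x0)" x0 UNIV]
      assms[unfolded frechet_derivative_works] unfolding differentiable_def by auto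
  show ?thesis unfolding det_def
    by (intro differentiable_sum differentiable_mult differentiable_const ballI pd) auto
qed

lemma matrix_inv_cramer:
  fixes A :: "'a::field^'n::finite^'n"
  assumes "det A \<noteq> 0"
  shows "matrix_inv A $ l $ k = det (\<chi> i j. if j = l then axis k 1 $ i else A$i$j) / det A"
proof -
  have inv: "invertible A" using assms by (simp add: invertible_det_nz)
  define x where "x = (\<chi> m. matrix_inv A $ m $ k)"
  have "A *v x = column k (A ** matrix_inv A)"
    by (simp add: x_def vec_eq_iff matrix_vector_mult_def matrix_matrix_mult_def column_def)
  also have "\<dots> = axis k 1"
    by (simp add: matrix_inv_works[OF inv] column_def mat_def axis_def vec_eq_iff)
  finally have "A *v x = axis k 1" .
  then have "x = (\<chi> m. det(\<chi> i j. if j=m then axis k 1 $i else A$i$j) / det A)"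
    using cramer[OF assms] by blast
  then show ?thesis by (simp add: x_def vec_eq_iff)
qed

lemma matrix_inv_differentiable:
  fixes A :: "'a::real_normed_vector \<Rightarrow> complex^'n::finite^'n"
  assumes d: "\<And>i j. (\<lambda>x. A x $ i $ j) differentiable (at x0)" and nz: "det (A x0) \<noteq> 0"
  shows "(\<lambda>x. matrix_inv (A x) $ l $ k) differentiable (at x0)"
proof -
  have dd: "(\<lambda>x. det (A x)) differentiable (at x0)" by (rule det_differentiable[OF d])
  then have c: "continuous (at x0) (\<lambda>x. det (A x))"
    by (rule differentiable_imp_continuous_within)
  obtain e where e: "e > 0" "\<And>y. dist x0 y < e \<Longrightarrow> det (A y) \<noteq> 0"
    using continuous_at_avoid[of x0 "\<lambda>x. det (A x)" 0, OF c nz] by blast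
  define g where "g = (\<lambda>x. det (\<chi> i j. if j = l then axis k 1 $ i else A x$i$j) / det (A x))"
  have ifd: "(\<lambda>x. if j = l then axis k 1 $ i else A x$i$j) differentiable (at x0)" for i j
    by (cases "j = l") (simp_all add: d)
  have "g differentiable (at x0)"
    unfolding g_def
    by (intro differentiable_divide dd det_differentiable nz) (simp_all add: ifd)
  then show ?thesis
    using differentiable_transform_within[of g x0 UNIV e "\<lambda>x. matrix_inv (A x) $ l $ k"] e
    by (auto simp: g_def matrix_inv_cramer dist_commute)
qed

lemma det_cnj_transpose:
  fixes J :: "complex^'n::finite^'n"
  shows "det (\<chi> b l. cnj (J $ l $ b)) = cnj (det J)"
proof -
  have "(\<chi> b l. cnj (J $ l $ b)) = transpose (\<chi> l b. cnj (J $ l $ b))"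
    by (simp add: transpose_def)
  then have "det (\<chi> b l. cnj (J $ l $ b)) = det (\<chi> l b. cnj (J $ l $ b))"
    by (simp only: det_transpose)
  also have "\<dots> = cnj (det J)"
    unfolding det_def cnj_sum
  proof (rule sum.cong)
    fix p assume "p \<in> {p. p permutes (UNIV::'n set)}"
    show "of_int (sign p) * (\<Prod>i\<in>UNIV. (\<chi> l b. cnj (J $ l $ b)) $ i $ p i) =
          cnj (of_int (sign p) * (\<Prod>i\<in>UNIV. J $ i $ p i))"
      by (simp only: complex_cnj_mult cnj_prod complex_cnj_of_int vec_lambda_beta)
  qed simp
  finally show ?thesis .
qed




lemma sum_if_zero[simp]: "(\<Sum>x\<in>A. if P then f x else 0) = (if P then sum f A else 0)"
  by auto

lemma if_mult_zero: "(if P then a else 0) * (b::'a::mult_zero) = (if P then a * b else 0)"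
  "b * (if P then a else 0) = (if P then b * a else 0)" by auto

lemma diff_coord[simp]: "(\<lambda>x::complex^'n::finite. x $ k) differentiable (at w)"
  using holo_coord holo_at_diff by blast

locale LS =
  fixes U :: "(complex^'n::finite) set"
    and h :: "complex^'n \<Rightarrow> complex^'n^'n"
    and p :: "complex^'n"
    and e :: "'n \<Rightarrow> complex^'n"
  assumes U: "open U" and pU: "p \<in> U"
    and herm: "hermitian_metric_on U h"
    and einv: "invertible (\<chi> k i. e i $ k)"
begin

definition "Gm a m c = chern_Gamma h a m c p"
definition "dG q a m c = wirt q (chern_Gamma h a m c) p"
definition "Bc i j c = -(1/2) * (\<Sum>a\<in>UNIV. \<Sum>m\<in>UNIV. e i $ a * e j $ m * Gm a m c)"
definition "Cc i j m c = -(1/6) * ((\<Sum>a\<in>UNIV. \<Sum>b\<in>UNIV. (2 * Bc i j a * e m $ b + 2 * e m $ a * Bc i j b) * Gm a b c)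
    + (\<Sum>a\<in>UNIV. \<Sum>b\<in>UNIV. \<Sum>q\<in>UNIV. e i $ a * e j $ b * e m $ q * dG q a b c))"
definition "Fm w = (\<chi> k. p$k + (\<Sum>i\<in>UNIV. w$i * e i $ k) + (\<Sum>i\<in>UNIV. \<Sum>j\<in>UNIV. w$i * w$j * Bc i j k)
    + (\<Sum>i\<in>UNIV. \<Sum>j\<in>UNIV. \<Sum>m\<in>UNIV. w$i * w$j * w$m * Cc i j m k))"
definition "S i j m k = Cc i j m k + Cc j i m k + Cc j m i k"
definition "Jc w i k = e i $ k + (\<Sum>j\<in>UNIV. w$j * (Bc i j k + Bc j i k)) + (\<Sum>j\<in>UNIV. \<Sum>m\<in>UNIV. w$j * w$m * S i j m k)"
definition "dJc w i j k = Bc i j k + Bc j i k + (\<Sum>m\<in>UNIV. w$m * (S i j m k + S i m j k))"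

lemma holo_Fm: "holo_at (\<lambda>w. Fm w $ k) w"
  unfolding Fm_def vec_lambda_beta
  by (intro holo_add holo_sum holo_mult holo_const holo_coord finite)

lemma holo_Jc: "holo_at (\<lambda>w. Jc w i k) w"
  unfolding Jc_def
  by (intro holo_add holo_sum holo_mult holo_const holo_coord finite)

lemma holo_dJc: "holo_at (\<lambda>w. dJc w i j k) w"
  unfolding dJc_def
  by (intro holo_add holo_sum holo_mult holo_const holo_coord finite)

lemma wirt_Fm: "wirt i (\<lambda>w. Fm w $ k) w = Jc w i k"
  unfolding Fm_def vec_lambda_beta
  apply (simp add: wirt_add wirt_sum wirt_mult wirt_coord wirt_const)
  apply (simp add: Jc_def S_def distrib_right distrib_left sum.distrib if_mult_zero cong: if_cong)
  done

lemma wirt_Jc: "wirt j (\<lambda>w. Jc w i k) w = dJc w i j k"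
  unfolding Jc_def
  apply (simp add: wirt_add wirt_sum wirt_mult wirt_coord wirt_const)
  apply (simp add: dJc_def distrib_right distrib_left sum.distrib if_mult_zero cong: if_cong)
  done

lemma wirt_dJc: "wirt l (\<lambda>w. dJc w i j k) w = S i j l k + S i l j k"
  unfolding dJc_def
  apply (simp add: wirt_add wirt_sum wirt_mult wirt_coord wirt_const)
  apply (simp add: distrib_right distrib_left sum.distrib if_mult_zero cong: if_cong)
  done

definition "Am w = (\<chi> m i. Jc w i m)"

lemma Fm_hasD: "(Fm has_derivative (\<lambda>v. Am w *v v)) (at w)"
  using vec_holo_hasD[of Fm w] holo_Fm by (simp add: wirt_Fm Am_def)

lemma Fm0: "Fm 0 = p"
  by (simp add: Fm_def vec_eq_iff)

lemma Jc0: "Jc 0 i k = e i $ k"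
  by (simp add: Jc_def)

lemma Am0: "Am 0 = (\<chi> k i. e i $ k)"
  by (simp add: Am_def Jc0)

lemma Fm_cont: "continuous_on T Fm"
  using Fm_hasD has_derivative_continuous continuous_at_imp_continuous_on by blast

lemma Jc_cont: "isCont (\<lambda>x. Jc x i m) w"
  using holo_Jc holo_at_diff differentiable_imp_continuous_within by blast

lemma IFT:
  obtains V W g where "open V" "open W" "0 \<in> V" "V \<subseteq> {w. Fm w \<in> U}"
    "homeomorphism V W Fm g"
    "\<And>y. y \<in> W \<Longrightarrow> (g has_derivative (\<lambda>v. matrix_inv (Am (g y)) *v v)) (at y)"
    "\<And>w. w \<in> V \<Longrightarrow> invertible (Am w)"
proof -
  define U0 where "U0 = Fm -` U"
  have oU0: "open U0" unfolding U0_def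
    by (rule open_vimage[OF U Fm_cont])
  have 0: "0 \<in> U0" by (simp add: U0_def Fm0 pU)
  define f' where "f' w = Blinfun (\<lambda>v. Am w *v v)" for w
  have f'a: "blinfun_apply (f' w) = (\<lambda>v. Am w *v v)" for w
    unfolding f'_def by (rule bounded_linear_Blinfun_apply) simp
  have derf: "(Fm has_derivative blinfun_apply (f' x)) (at x)" for x
    unfolding f'a by (rule Fm_hasD)
  have contf: "continuous_on U0 f'"
  proof (rule continuous_at_imp_continuous_on, intro ballI continuous_blinfun_componentwiseI)
    fix x i j assume "x \<in> U0" "i \<in> (Basis :: (complex^'n) set)" "j \<in> (Basis :: (complex^'n) set)"
    have "((\<lambda>x. (\<chi> m. \<Sum>a\<in>UNIV. Jc x a m * j $ a) \<bullet> i) \<longlongrightarrow> (\<chi> m. \<Sum>a\<in>UNIV. Jc x a m * j $ a) \<bullet> i) (at x)"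
      by (intro tendsto_intros isCont_tendsto_compose[OF Jc_cont] tendsto_ident_at)
    then show "continuous (at x) (\<lambda>xa. blinfun_apply (f' xa) j \<bullet> i)"
      unfolding continuous_at f'a by (simp add: Am_def matrix_vector_mult_def)
  qed
  define invf where "invf = Blinfun (\<lambda>v. matrix_inv (Am 0) *v v)"
  have invfa: "blinfun_apply invf = (\<lambda>v. matrix_inv (Am 0) *v v)"
    unfolding invf_def by (rule bounded_linear_Blinfun_apply) simp
  have inv0: "invertible (Am 0)" using einv by (simp add: Am0)
  have invf: "invf o\<^sub>L f' 0 = id_blinfun"
    by (rule blinfun_eqI) (simp add: invfa f'a matrix_vector_mul_assoc matrix_inv_works[OF inv0])
  obtain V W g g' where V: "open V" "V \<subseteq> U0" "0 \<in> V" "open W" "Fm 0 \<in> W"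
    and hom: "homeomorphism V W Fm g"
    and gd: "\<And>y. y \<in> W \<Longrightarrow> (g has_derivative (g' y)) (at y)"
    and g': "\<And>y. y \<in> W \<Longrightarrow> g' y = inv (blinfun_apply (f'(g y)))"
    and bij: "\<And>y. y \<in> W \<Longrightarrow> bij (blinfun_apply (f'(g y)))"
    using inverse_function_theorem[OF oU0 derf contf 0 invf] by blast
  have gV: "y \<in> W \<Longrightarrow> g y \<in> V" for y using hom by (auto simp: homeomorphism_def)
  have FV: "w \<in> V \<Longrightarrow> Fm w \<in> W" and gF: "w \<in> V \<Longrightarrow> g (Fm w) = w" for w
    using hom by (auto simp: homeomorphism_def)
  have invW: "invertible (Am (g y))" if "y \<in> W" for y
    using bij[OF that] by (simp add: f'a invertible_eq_bij)
  show ?thesis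
  proof
    show "open V" "open W" "0 \<in> V" using V by auto
    show "V \<subseteq> {w. Fm w \<in> U}" using V(2) by (auto simp: U0_def)
    show "homeomorphism V W Fm g" by (rule hom)
    show "invertible (Am w)" if "w \<in> V" for w
      using invW[OF FV[OF that]] gF[OF that] by simp
    show "(g has_derivative (\<lambda>v. matrix_inv (Am (g y)) *v v)) (at y)" if "y \<in> W" for y
    proof -
      have "g' y = (\<lambda>v. matrix_inv (Am (g y)) *v v)"
        unfolding g'[OF that] f'a
        by (rule inv_unique_comp) (auto simp: fun_eq_iff matrix_vector_mul_assoc matrix_inv_works[OF invW[OF that]])
      then show ?thesis using gd[OF that] by simp
    qed
  qed
qed

lemma hsm: "smooth_on U (\<lambda>z. h z $ i $ j)"
  using herm by (simp add: hermitian_metric_on_def)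

lemma h_diff: "z \<in> U \<Longrightarrow> (\<lambda>z. h z $ a $ b) differentiable (at z)"
  using hsm[of a b] unfolding smooth_on_def by (metis foldr.simps(1) id_apply)

lemma ddir_diff: "z \<in> U \<Longrightarrow> ddir v (\<lambda>z. h z $ a $ b) differentiable (at z)"
  using hsm[of a b] unfolding smooth_on_def
  by (metis (no_types, lifting) comp_apply foldr.simps(1,2) id_apply)

lemma wirt_ddir: "wirt m f = (\<lambda>z. (ddir (axis m 1) f z - \<i> * ddir (axis m \<i>) f z) / 2)"
  by (simp add: fun_eq_iff wirt_def ddir_def)

lemma wh_diff: "z \<in> U \<Longrightarrow> wirt m (\<lambda>z. h z $ a $ b) differentiable (at z)"
  unfolding wirt_ddir
  by (intro differentiable_divide differentiable_diff differentiable_mult differentiable_const ddir_diff) auto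

lemma H_inv: assumes "z \<in> U" shows "invertible (h z)"
proof -
  have "\<forall>x. h z *v x = 0 \<longrightarrow> x = 0"
  proof (intro allI impI, rule ccontr)
    fix x assume hx: "h z *v x = 0" and x0: "x \<noteq> 0"
    define v where "v = (\<chi> i. cnj (x $ i))"
    have v0: "v \<noteq> 0" using x0 by (auto simp: v_def vec_eq_iff)
    have "(\<Sum>i\<in>UNIV. \<Sum>j\<in>UNIV. v $ i * h z $ i $ j * cnj (v $ j))
        = (\<Sum>i\<in>UNIV. cnj (x $ i) * (h z *v x) $ i)"
      by (simp add: v_def matrix_vector_mult_def sum_distrib_left mult.assoc)
    also have "\<dots> = 0" by (simp add: hx)
    finally have "(\<Sum>i\<in>UNIV. \<Sum>j\<in>UNIV. v $ i * h z $ i $ j * cnj (v $ j)) = 0" .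
    moreover have "\<forall>z\<in>U. \<forall>v. v \<noteq> 0 \<longrightarrow> Re (\<Sum>i\<in>UNIV. \<Sum>j\<in>UNIV. v $ i * h z $ i $ j * cnj (v $ j)) > 0"
      using herm unfolding hermitian_metric_on_def by blast
    ultimately show False using assms v0 by fastforce
  qed
  then show ?thesis
    using matrix_left_invertible_ker invertible_left_inverse by blast
qed

lemma H_det: "z \<in> U \<Longrightarrow> det (h z) \<noteq> 0"
  using H_inv invertible_det_nz by blast

lemma Gam_diff: "z \<in> U \<Longrightarrow> chern_Gamma h a m c differentiable (at z)"
proof -
  assume z: "z \<in> U"
  have "(\<lambda>z. matrix_inv (h z) $ l $ c) differentiable (at z)" for l
  proof (rule matrix_inv_differentiable)
    show "(\<lambda>x. h x $ i $ j) differentiable (at z)" for i j using h_diff[OF z] .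
    show "det (h z) \<noteq> 0" using H_det[OF z] .
  qed
  then show ?thesis
    unfolding chern_Gamma_def[abs_def]
    by (intro differentiable_sum ballI differentiable_mult wh_diff[OF z]) auto
qed

lemma wh_Gam: assumes z: "z \<in> U"
  shows "wirt m (\<lambda>z. h z $ a $ b) z = (\<Sum>c\<in>UNIV. chern_Gamma h a m c z * h z $ c $ b)"
proof -
  have MH: "matrix_inv (h z) ** h z = mat 1" using matrix_inv_works(2)[OF H_inv[OF z]] .
  have "(\<Sum>c\<in>UNIV. chern_Gamma h a m c z * h z $ c $ b)
      = (\<Sum>l\<in>UNIV. wirt m (\<lambda>w. h w $ a $ l) z * (matrix_inv (h z) ** h z) $ l $ b)"
  proof -
    have "(\<Sum>c\<in>UNIV. chern_Gamma h a m c z * h z $ c $ b)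
       = (\<Sum>c\<in>UNIV. \<Sum>l\<in>UNIV. wirt m (\<lambda>w. h w $ a $ l) z * (matrix_inv (h z) $ l $ c * h z $ c $ b))"
      unfolding chern_Gamma_def by (simp only: sum_distrib_right mult.assoc)
    also have "\<dots> = (\<Sum>l\<in>UNIV. \<Sum>c\<in>UNIV. wirt m (\<lambda>w. h w $ a $ l) z * (matrix_inv (h z) $ l $ c * h z $ c $ b))"
      by (rule sum.swap)
    also have "\<dots> = (\<Sum>l\<in>UNIV. wirt m (\<lambda>w. h w $ a $ l) z * (matrix_inv (h z) ** h z) $ l $ b)"
      unfolding matrix_matrix_mult_def by (simp only: sum_distrib_left vec_lambda_beta)
    finally show ?thesis .
  qed
  also have "\<dots> = wirt m (\<lambda>z. h z $ a $ b) z"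
    by (simp add: MH mat_def if_mult_zero cong: if_cong)
  finally show ?thesis by simp
qed

end



lemma sum_perm4: "(\<Sum>a\<in>A. \<Sum>b\<in>B. \<Sum>m\<in>M. \<Sum>c\<in>C. f a b m c) = (\<Sum>c\<in>C. \<Sum>b\<in>B. \<Sum>a\<in>A. \<Sum>m\<in>M. f a b m c)"
proof -
  have "(\<Sum>a\<in>A. \<Sum>b\<in>B. \<Sum>m\<in>M. \<Sum>c\<in>C. f a b m c) = (\<Sum>a\<in>A. \<Sum>b\<in>B. \<Sum>c\<in>C. \<Sum>m\<in>M. f a b m c)"
    by (rule sum.cong[OF refl], rule sum.cong[OF refl], rule sum.swap)
  also have "\<dots> = (\<Sum>b\<in>B. \<Sum>a\<in>A. \<Sum>c\<in>C. \<Sum>m\<in>M. f a b m c)"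
    by (rule sum.swap)
  also have "\<dots> = (\<Sum>b\<in>B. \<Sum>c\<in>C. \<Sum>a\<in>A. \<Sum>m\<in>M. f a b m c)"
    by (rule sum.cong[OF refl], rule sum.swap)
  also have "\<dots> = (\<Sum>c\<in>C. \<Sum>b\<in>B. \<Sum>a\<in>A. \<Sum>m\<in>M. f a b m c)"
    by (rule sum.swap)
  finally show ?thesis .
qed

lemma aux1: "(x::complex) * (\<Sum>m\<in>M. y m * (\<Sum>c\<in>C. g m c * k c)) * z = (\<Sum>m\<in>M. \<Sum>c\<in>C. x * y m * g m c * k c * z)"
  by (simp add: sum_distrib_left sum_distrib_right mult.assoc)

definition cub :: "complex^'n::finite \<Rightarrow> ('n \<Rightarrow> 'n \<Rightarrow> 'n \<Rightarrow> complex) \<Rightarrow> complex" where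
  "cub X f = (\<Sum>i\<in>UNIV. \<Sum>j\<in>UNIV. \<Sum>k\<in>UNIV. f i j k * (X$i * X$j * X$k))"

lemma cub_add: "cub X (\<lambda>i j k. f i j k + g i j k) = cub X f + cub X g"
  by (simp add: cub_def distrib_right sum.distrib)

lemma cub_cmult: "cub X (\<lambda>i j k. c * f i j k) = c * cub X f"
  by (simp add: cub_def sum_distrib_left mult.assoc)

lemma cub_s12: "cub X (\<lambda>i j k. f j i k) = cub X f"
proof -
  have "cub X (\<lambda>i j k. f j i k) = (\<Sum>j\<in>UNIV. \<Sum>i\<in>UNIV. \<Sum>k\<in>UNIV. f j i k * (X$i * X$j * X$k))"
    unfolding cub_def by (rule sum.swap)
  also have "\<dots> = cub X f" unfolding cub_def by (intro sum.cong refl) (simp add: mult_ac)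
  finally show ?thesis .
qed

lemma cub_s23: "cub X (\<lambda>i j k. f i k j) = cub X f"
proof -
  have "cub X (\<lambda>i j k. f i k j) = (\<Sum>i\<in>UNIV. \<Sum>k\<in>UNIV. \<Sum>j\<in>UNIV. f i k j * (X$i * X$j * X$k))"
    unfolding cub_def by (rule sum.cong[OF refl], rule sum.swap)
  also have "\<dots> = cub X f" unfolding cub_def by (intro sum.cong refl) (simp add: mult_ac)
  finally show ?thesis .
qed

lemma cub_jki: "cub X (\<lambda>i j k. f j k i) = cub X f"
  using cub_s12[of X "\<lambda>i j k. f i k j"] cub_s23[of X f] by simp

lemma cub_kji: "cub X (\<lambda>i j k. f k j i) = cub X f"
  using cub_s12[of X "\<lambda>i j k. f k i j"] cub_s23[of X "\<lambda>i j k. f j i k"] cub_s12[of X f] by simp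

lemma cub_kij: "cub X (\<lambda>i j k. f k i j) = cub X f"
  using cub_s23[of X "\<lambda>i j k. f j i k"] cub_s12[of X f] by simp

lemma wirt_local:
  assumes "f differentiable (at x)" "open S" "x \<in> S" "\<And>y. y \<in> S \<Longrightarrow> f y = g y"
  shows "wirt i g x = wirt i f x"
  unfolding wirt_def using frechet_derivative_transform_within_open[OF assms] by simp

lemma sum_perm4b: "(\<Sum>i\<in>A. \<Sum>j\<in>B. \<Sum>k\<in>M. \<Sum>c\<in>C. f i j k c) = (\<Sum>c\<in>C. \<Sum>i\<in>A. \<Sum>j\<in>B. \<Sum>k\<in>M. f i j k c)"
proof -
  have "(\<Sum>i\<in>A. \<Sum>j\<in>B. \<Sum>k\<in>M. \<Sum>c\<in>C. f i j k c) = (\<Sum>i\<in>A. \<Sum>j\<in>B. \<Sum>c\<in>C. \<Sum>k\<in>M. f i j k c)"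
    by (rule sum.cong[OF refl], rule sum.cong[OF refl], rule sum.swap)
  also have "\<dots> = (\<Sum>i\<in>A. \<Sum>c\<in>C. \<Sum>j\<in>B. \<Sum>k\<in>M. f i j k c)"
    by (rule sum.cong[OF refl], rule sum.swap)
  also have "\<dots> = (\<Sum>c\<in>C. \<Sum>i\<in>A. \<Sum>j\<in>B. \<Sum>k\<in>M. f i j k c)"
    by (rule sum.swap)
  finally show ?thesis .
qed

lemma cub_split:
  "cub X (\<lambda>i j k. \<Sum>c\<in>UNIV. a i j k c * K c + V j k c * b i c)
   = (\<Sum>c\<in>UNIV. K c * cub X (\<lambda>i j k. a i j k c)
        + (\<Sum>i\<in>UNIV. b i c * X$i) * (\<Sum>j\<in>UNIV. \<Sum>k\<in>UNIV. V j k c * (X$j * X$k)))"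
proof -
  have "cub X (\<lambda>i j k. \<Sum>c\<in>UNIV. a i j k c * K c + V j k c * b i c)
     = (\<Sum>i\<in>UNIV. \<Sum>j\<in>UNIV. \<Sum>k\<in>UNIV. \<Sum>c\<in>UNIV. (a i j k c * K c + V j k c * b i c) * (X$i * X$j * X$k))"
    unfolding cub_def by (simp only: sum_distrib_right)
  also have "\<dots> = (\<Sum>c\<in>UNIV. \<Sum>i\<in>UNIV. \<Sum>j\<in>UNIV. \<Sum>k\<in>UNIV. (a i j k c * K c + V j k c * b i c) * (X$i * X$j * X$k))"
    by (rule sum_perm4b)
  also have "\<dots> = (\<Sum>c\<in>UNIV. K c * cub X (\<lambda>i j k. a i j k c)
        + (\<Sum>i\<in>UNIV. b i c * X$i) * (\<Sum>j\<in>UNIV. \<Sum>k\<in>UNIV. V j k c * (X$j * X$k)))"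
    unfolding cub_def
  proof (rule sum.cong[OF refl])
    fix c
    have "(\<Sum>i\<in>UNIV. \<Sum>j\<in>UNIV. \<Sum>k\<in>UNIV. (a i j k c * K c + V j k c * b i c) * (X$i * X$j * X$k))
      = K c * (\<Sum>i\<in>UNIV. \<Sum>j\<in>UNIV. \<Sum>k\<in>UNIV. a i j k c * (X$i * X$j * X$k))
        + (\<Sum>i\<in>UNIV. (b i c * X$i) * (\<Sum>j\<in>UNIV. \<Sum>k\<in>UNIV. V j k c * (X$j * X$k)))"
      by (simp add: distrib_right distrib_left sum.distrib sum_distrib_left mult_ac)
    then show "(\<Sum>i\<in>UNIV. \<Sum>j\<in>UNIV. \<Sum>k\<in>UNIV. (a i j k c * K c + V j k c * b i c) * (X$i * X$j * X$k))
      = K c * (\<Sum>i\<in>UNIV. \<Sum>j\<in>UNIV. \<Sum>k\<in>UNIV. a i j k c * (X$i * X$j * X$k))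
        + (\<Sum>i\<in>UNIV. b i c * X$i) * (\<Sum>j\<in>UNIV. \<Sum>k\<in>UNIV. V j k c * (X$j * X$k))"
      by (simp only: sum_distrib_right)
  qed
  finally show ?thesis .
qed

lemma antisym_quad:
  assumes "\<And>j k. V j k + V k j = (0::complex)"
  shows "(\<Sum>j\<in>UNIV. \<Sum>k\<in>UNIV. V j k * (X$j * X$k)) = 0"
proof -
  define s where "s = (\<Sum>j\<in>UNIV. \<Sum>k\<in>UNIV. V j k * (X$j * X$k))"
  have "s = (\<Sum>k\<in>UNIV. \<Sum>j\<in>UNIV. V j k * (X$j * X$k))" unfolding s_def by (rule sum.swap)
  also have "\<dots> = (\<Sum>j\<in>UNIV. \<Sum>k\<in>UNIV. - (V j k * (X$j * X$k)))"
    by (intro sum.cong refl) (metis add_eq_0_iff assms mult.commute mult_minus_left)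
  also have "\<dots> = - s" by (simp add: s_def sum_negf)
  finally show ?thesis unfolding s_def[symmetric] by simp
qed

context LS begin

definition "G w = pullback_metric Fm h w"
definition "Vf w i j c = dJc w i j c + (\<Sum>a\<in>UNIV. \<Sum>m\<in>UNIV. Jc w i a * Jc w j m * chern_Gamma h a m c (Fm w))"

lemma G_eq: "G w $ i $ l = (\<Sum>a\<in>UNIV. \<Sum>b\<in>UNIV. Jc w i a * h (Fm w) $ a $ b * cnj (Jc w l b))"
  by (simp add: G_def pullback_metric_def wirt_Fm)

lemma Fm_diff: "Fm differentiable (at w)"
  using Fm_hasD differentiable_def by blast

lemma hF_diff: "Fm w \<in> U \<Longrightarrow> (\<lambda>w. h (Fm w) $ a $ b) differentiable (at w)"
  using differentiable_chain_at[OF Fm_diff h_diff, of w a b] by (simp add: o_def)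

lemma cJ_diff: "(\<lambda>w. cnj (Jc w l b)) differentiable (at w)"
  using differentiable_compose[OF bounded_linear_imp_differentiable[OF bounded_linear_cnj] holo_at_diff[OF holo_Jc]]
  by blast

lemma J_diff: "(\<lambda>w. Jc w l b) differentiable (at w)"
  using holo_at_diff[OF holo_Jc] .

lemma wirt_hF: "Fm w \<in> U \<Longrightarrow> wirt j (\<lambda>w. h (Fm w) $ a $ b) w
   = (\<Sum>m\<in>UNIV. Jc w j m * (\<Sum>c\<in>UNIV. chern_Gamma h a m c (Fm w) * h (Fm w) $ c $ b))"
  using wirt_chain[of Fm w "\<lambda>z. h z $ a $ b" j, OF holo_Fm h_diff]
  by (simp add: wirt_Fm wh_Gam)

lemma A1:
  assumes FU: "Fm w \<in> U"
  shows "wirt j (\<lambda>w. G w $ i $ l) w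
     = (\<Sum>c\<in>UNIV. \<Sum>b\<in>UNIV. Vf w i j c * h (Fm w) $ c $ b * cnj (Jc w l b))"
proof -
  have eq: "(\<lambda>w. G w $ i $ l) = (\<lambda>w. \<Sum>a\<in>UNIV. \<Sum>b\<in>UNIV. Jc w i a * h (Fm w) $ a $ b * cnj (Jc w l b))"
    by (simp add: G_eq fun_eq_iff)
  have "wirt j (\<lambda>w. G w $ i $ l) w = (\<Sum>a\<in>UNIV. \<Sum>b\<in>UNIV.
      dJc w i j a * h (Fm w) $ a $ b * cnj (Jc w l b)
      + Jc w i a * (\<Sum>m\<in>UNIV. Jc w j m * (\<Sum>c\<in>UNIV. chern_Gamma h a m c (Fm w) * h (Fm w) $ c $ b)) * cnj (Jc w l b))"
    unfolding eq
    by (simp add: wirt_sum wirt_mult hF_diff[OF FU] cJ_diff J_diff wirt_hF[OF FU] wirt_Jc wirt_cnj[OF holo_Jc] distrib_right)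
  also have "\<dots> = (\<Sum>a\<in>UNIV. \<Sum>b\<in>UNIV. dJc w i j a * h (Fm w) $ a $ b * cnj (Jc w l b))
     + (\<Sum>a\<in>UNIV. \<Sum>b\<in>UNIV. \<Sum>m\<in>UNIV. \<Sum>c\<in>UNIV. Jc w i a * Jc w j m * chern_Gamma h a m c (Fm w) * h (Fm w) $ c $ b * cnj (Jc w l b))"
    by (simp only: sum.distrib aux1)
  also have "\<dots> = (\<Sum>c\<in>UNIV. \<Sum>b\<in>UNIV. dJc w i j c * h (Fm w) $ c $ b * cnj (Jc w l b))
     + (\<Sum>c\<in>UNIV. \<Sum>b\<in>UNIV. \<Sum>a\<in>UNIV. \<Sum>m\<in>UNIV. Jc w i a * Jc w j m * chern_Gamma h a m c (Fm w) * h (Fm w) $ c $ b * cnj (Jc w l b))"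
    by (rule arg_cong2[where f="(+)"], rule refl, rule sum_perm4)
  also have "\<dots> = (\<Sum>c\<in>UNIV. \<Sum>b\<in>UNIV. Vf w i j c * h (Fm w) $ c $ b * cnj (Jc w l b))"
    by (simp add: Vf_def sum.distrib sum_distrib_left sum_distrib_right mult.assoc distrib_right)
  finally show ?thesis .
qed

definition "Jm w = (\<chi> i c. Jc w i c)"

lemma A2:
  assumes FU: "Fm w \<in> U" and inv: "invertible (Am w)"
  shows "chern_Gamma G i j k w = (\<Sum>c\<in>UNIV. Vf w i j c * matrix_inv (Jm w) $ c $ k)"
proof -
  define J where "J = Jm w"
  define Hm where "Hm = h (Fm w)"
  define Js where "Js = (\<chi> b l. cnj (J $ l $ b))"
  define K where "K = matrix_inv J"
  define M where "M = matrix_inv (G w)"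
  define Vv where "Vv = (\<chi> c. Vf w i j c)"
  have JA: "J = transpose (Am w)" by (simp add: J_def Jm_def Am_def transpose_def)
  have dJ: "det J \<noteq> 0" using inv by (simp add: JA invertible_det_nz)
  have GJ: "G w = J ** (Hm ** Js)"
    by (simp add: vec_eq_iff G_eq matrix_matrix_mult_def sum_distrib_left mult.assoc J_def Jm_def Js_def Hm_def)
  have dG: "det (G w) \<noteq> 0"
    using dJ H_det[OF FU] by (simp add: GJ det_mul Js_def det_cnj_transpose Hm_def)
  have GM: "G w ** M = mat 1" unfolding M_def
    using matrix_inv_works(1) dG invertible_det_nz by blast
  have KJ: "K ** J = mat 1" unfolding K_def
    using matrix_inv_works(2) dJ invertible_det_nz by blast
  have HK: "Hm ** Js = K ** G w"
    by (simp add: GJ matrix_mul_assoc KJ)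
  have Phi: "wirt j (\<lambda>w. G w $ i $ l) w = (Vv v* (Hm ** Js)) $ l" for l
    unfolding A1[OF FU] 
    by (simp add: vector_matrix_mult_def matrix_matrix_mult_def Vv_def Js_def J_def Jm_def Hm_def
        sum_distrib_left sum_distrib_right mult.assoc mult.commute mult.left_commute)
  have "chern_Gamma G i j k w = ((Vv v* (Hm ** Js)) v* M) $ k"
    unfolding chern_Gamma_def Phi by (simp add: vector_matrix_mult_def M_def mult.commute)
  also have "\<dots> = (Vv v* K) $ k"
    by (simp add: HK vector_matrix_mul_assoc matrix_mul_assoc[symmetric] GM)
  also have "\<dots> = (\<Sum>c\<in>UNIV. Vf w i j c * matrix_inv (Jm w) $ c $ k)"
    by (simp add: vector_matrix_mult_def Vv_def K_def J_def mult.commute)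
  finally show ?thesis .
qed

lemma VB: "Vf 0 i j c + Vf 0 j i c = 0"
proof -
  define P where "P i j = (\<Sum>a\<in>UNIV. \<Sum>m\<in>UNIV. e i $ a * e j $ m * Gm a m c)" for i j
  have B: "Bc i j c = -(1/2) * P i j" for i j by (simp add: Bc_def P_def)
  have V: "Vf 0 i j c = Bc i j c + Bc j i c + P i j" for i j
    by (simp add: Vf_def dJc_def Jc0 Fm0 P_def Gm_def)
  show ?thesis by (simp add: V B algebra_simps)
qed

lemma Gam_Fm_diff: "(\<lambda>w. chern_Gamma h a m c (Fm w)) differentiable (at 0)"
  using differentiable_chain_at[OF Fm_diff Gam_diff, of 0] pU by (simp add: Fm0 o_def)

lemma Vf_diff: "(\<lambda>w. Vf w j k c) differentiable (at 0)"
  unfolding Vf_def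
  by (intro differentiable_add differentiable_sum ballI differentiable_mult holo_at_diff[OF holo_dJc]
      J_diff Gam_Fm_diff finite)

lemma wirt_Vf: "wirt i (\<lambda>w. Vf w j k c) 0 = S j k i c + S j i k c +
   (\<Sum>a\<in>UNIV. \<Sum>m\<in>UNIV. dJc 0 j i a * e k $ m * Gm a m c + e j $ a * dJc 0 k i m * Gm a m c
       + e j $ a * e k $ m * (\<Sum>q\<in>UNIV. e i $ q * dG q a m c))"
proof -
  have wG: "wirt i (\<lambda>w. chern_Gamma h a m c (Fm w)) 0 = (\<Sum>q\<in>UNIV. e i $ q * dG q a m c)" for a m
    using wirt_chain[of Fm 0 "chern_Gamma h a m c" i, OF holo_Fm] Gam_diff[of p] pU
    by (simp add: Fm0 wirt_Fm Jc0 dG_def)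
  show ?thesis
    unfolding Vf_def
    by (simp add: wirt_add wirt_sum wirt_mult J_diff Gam_Fm_diff holo_at_diff[OF holo_dJc] wirt_dJc wirt_Jc wG Jc0 Fm0
        Gm_def distrib_right)
qed

lemma Cc_eq: "Cc i j k c = -(1/6) * (2 * (\<Sum>a\<in>UNIV. \<Sum>m\<in>UNIV. Bc i j a * e k $ m * Gm a m c)
   + 2 * (\<Sum>a\<in>UNIV. \<Sum>m\<in>UNIV. e k $ a * Bc i j m * Gm a m c)
   + (\<Sum>a\<in>UNIV. \<Sum>b\<in>UNIV. \<Sum>q\<in>UNIV. e i $ a * e j $ b * e k $ q * dG q a b c))"
  unfolding Cc_def by (simp add: distrib_right sum.distrib sum_distrib_left mult.assoc)

lemma claim2: "cub X (\<lambda>i j k. wirt i (\<lambda>w. Vf w j k c) 0) = 0"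
proof -
  define BG where "BG i j k = (\<Sum>a\<in>UNIV. \<Sum>m\<in>UNIV. Bc i j a * e k $ m * Gm a m c)" for i j k
  define g where "g i j k = (\<Sum>a\<in>UNIV. \<Sum>m\<in>UNIV. e k $ a * Bc i j m * Gm a m c)" for i j k
  define hh where "hh i j k = (\<Sum>a\<in>UNIV. \<Sum>b\<in>UNIV. \<Sum>q\<in>UNIV. e i $ a * e j $ b * e k $ q * dG q a b c)" for i j k
  define C where "C i j k = Cc i j k c" for i j k
  have C: "C i j k = -(1/6) * (2 * BG i j k + 2 * g i j k + hh i j k)" for i j k
    by (simp add: C_def Cc_eq BG_def g_def hh_def)
  have W: "wirt i (\<lambda>w. Vf w j k c) 0 = (C j k i + C k j i + C k i j) + (C j i k + C i j k + C i k j)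
     + (BG j i k + BG i j k) + (g k i j + g i k j) + hh j k i" for i j k
    unfolding wirt_Vf S_def C_def BG_def g_def hh_def dJc_def
    by (simp add: distrib_right distrib_left sum.distrib sum_distrib_left mult.assoc)
  have "cub X (\<lambda>i j k. wirt i (\<lambda>w. Vf w j k c) 0)
     = 6 * cub X C + 2 * cub X BG + 2 * cub X g + cub X hh"
    unfolding W cub_add cub_jki[of X C] cub_kji[of X C] cub_kij[of X C] cub_s12[of X C] cub_s23[of X C]
      cub_s12[of X BG] cub_kij[of X g] cub_s23[of X g] cub_jki[of X hh]
    by simp
  also have "\<dots> = 0"
    unfolding C cub_cmult cub_add by (simp add: field_simps)
  finally show ?thesis .
qed

lemma G_fun: "pullback_metric Fm h = G"
  by (simp add: fun_eq_iff G_def)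

lemma Jm0_det: "det (Jm 0) \<noteq> 0"
proof -
  have "Jm 0 = transpose (Am 0)" by (simp add: Jm_def Am_def transpose_def)
  then show ?thesis using einv by (simp add: Am0 invertible_det_nz)
qed

lemma Kinv_diff: "(\<lambda>w. matrix_inv (Jm w) $ c $ l) differentiable (at 0)"
  by (rule matrix_inv_differentiable[of Jm 0, OF _ Jm0_det]) (simp add: Jm_def J_diff)

lemma main:
  shows "\<exists>V W F. open V \<and> open W \<and> 0 \<in> V \<and> W \<subseteq> U \<and> bij_betw F V W
           \<and> holo_on V F \<and> holo_on W (inv_into V F) \<and> F 0 = p
           \<and> (\<forall>i k. wirt i (\<lambda>w. F w $ k) 0 = e i $ k)
           \<and> (\<forall>i j k. chern_Gamma_tilde (pullback_metric F h) i j k 0 = 0)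
           \<and> (\<forall>l (X::complex^'n).
                (\<Sum>i\<in>UNIV. \<Sum>j\<in>UNIV. \<Sum>k\<in>UNIV. wirt i (chern_Gamma_tilde (pullback_metric F h) j k l) 0
                                * X $ i * X $ j * X $ k) = 0
              \<and> (\<Sum>i\<in>UNIV. \<Sum>j\<in>UNIV. \<Sum>k\<in>UNIV. wirt i (chern_Gamma (pullback_metric F h) j k l) 0
                                * X $ i * X $ j * X $ k) = 0)"
proof -
  obtain V W g where oV: "open V" and oW: "open W" and V0: "0 \<in> V" and VU: "V \<subseteq> {w. Fm w \<in> U}"
    and hom: "homeomorphism V W Fm g"
    and gd: "\<And>y. y \<in> W \<Longrightarrow> (g has_derivative (\<lambda>v. matrix_inv (Am (g y)) *v v)) (at y)"
    and Ainv: "\<And>w. w \<in> V \<Longrightarrow> invertible (Am w)"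
    using IFT by blast
  have gF: "\<And>x. x \<in> V \<Longrightarrow> g (Fm x) = x" and FV: "Fm ` V = W"
    and Fg: "\<And>y. y \<in> W \<Longrightarrow> Fm (g y) = y" and gW: "g ` W = V"
    using hom by (auto simp: homeomorphism_def)
  have inj: "inj_on Fm V" by (metis gF inj_on_inverseI)
  have WU: "W \<subseteq> U" using FV VU by auto
  have bij: "bij_betw Fm V W" using inj FV by (simp add: bij_betw_def)
  have hol1: "holo_on V Fm" unfolding holo_on_def using Fm_hasD by blast
  have hol2: "holo_on W (inv_into V Fm)" unfolding holo_on_def
  proof
    fix y assume y: "y \<in> W"
    have "(inv_into V Fm has_derivative (\<lambda>v. matrix_inv (Am (g y)) *v v)) (at y)"
    proof (rule has_derivative_transform_within_open[OF gd[OF y] oW y])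
      fix x assume x: "x \<in> W"
      show "g x = inv_into V Fm x"
        using x gW Fg by (intro inv_into_f_eq[OF inj, symmetric]) auto
    qed
    then show "\<exists>A. (inv_into V Fm has_derivative (\<lambda>v. A *v v)) (at y)" by blast
  qed
  have wF: "\<forall>i k. wirt i (\<lambda>w. Fm w $ k) 0 = e i $ k" by (simp add: wirt_Fm Jc0)
  have FU: "\<And>w. w \<in> V \<Longrightarrow> Fm w \<in> U" using VU by auto
  define Q where "Q l j k w = (\<Sum>c\<in>UNIV. Vf w j k c * matrix_inv (Jm w) $ c $ l)" for l j k w
  have GQ: "\<And>w. w \<in> V \<Longrightarrow> chern_Gamma G j k l w = Q l j k w" for j k l
    unfolding Q_def using A2 FU Ainv by blast
  have tilde0: "chern_Gamma_tilde G i j k 0 = 0" for i j k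
  proof -
    have "chern_Gamma_tilde G i j k 0 = (chern_Gamma G i j k 0 + chern_Gamma G j i k 0) / 2"
      by (simp add: chern_Gamma_tilde_def chern_tau_def field_simps)
    also have "\<dots> = (\<Sum>c\<in>UNIV. (Vf 0 i j c + Vf 0 j i c) * matrix_inv (Jm 0) $ c $ k) / 2"
      by (simp add: GQ[OF V0] Q_def distrib_right sum.distrib)
    also have "\<dots> = 0" by (simp add: VB)
    finally show ?thesis .
  qed
  have Qd: "Q l j k differentiable (at 0)" for l j k
    unfolding Q_def[abs_def]
    by (intro differentiable_sum ballI differentiable_mult Vf_diff Kinv_diff) simp
  have wQ: "wirt i (Q l j k) 0 = (\<Sum>c\<in>UNIV. wirt i (\<lambda>w. Vf w j k c) 0 * matrix_inv (Jm 0) $ c $ l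
        + Vf 0 j k c * wirt i (\<lambda>w. matrix_inv (Jm w) $ c $ l) 0)" for i j k l
    unfolding Q_def[abs_def] by (simp add: wirt_sum wirt_mult Vf_diff Kinv_diff)
  have wG: "wirt i (chern_Gamma G j k l) 0 = wirt i (Q l j k) 0" for i j k l
    by (rule wirt_local[OF Qd oV V0]) (simp add: GQ)
  have cubQ: "cub X (\<lambda>i j k. wirt i (Q l j k) 0) = 0" for X l
  proof -
    have aq: "(\<Sum>j\<in>UNIV. \<Sum>k\<in>UNIV. Vf 0 j k c * (X$j * X$k)) = 0" for c
      by (rule antisym_quad[of "\<lambda>j k. Vf 0 j k c"]) (rule VB)
    show ?thesis
      unfolding wQ cub_split[where a="\<lambda>i j k c. wirt i (\<lambda>w. Vf w j k c) 0" and K="\<lambda>c. matrix_inv (Jm 0) $ c $ l"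
        and V="\<lambda>j k c. Vf 0 j k c" and b="\<lambda>i c. wirt i (\<lambda>w. matrix_inv (Jm w) $ c $ l) 0"]
      by (simp add: claim2 aq)
  qed
  have cubQ2: "cub X (\<lambda>i j k. wirt i (Q l k j) 0) = 0" for X l
    using cub_s23[of X "\<lambda>i j k. wirt i (Q l j k) 0"] cubQ by simp
  have tilde_eq: "chern_Gamma_tilde G j k l = (\<lambda>z. chern_Gamma G j k l z + (chern_Gamma G k j l z - chern_Gamma G j k l z) / 2)" for j k l
    by (simp add: fun_eq_iff chern_Gamma_tilde_def chern_tau_def)
  have wGt: "wirt i (chern_Gamma_tilde G j k l) 0 = wirt i (Q l j k) 0 + (wirt i (Q l k j) 0 - wirt i (Q l j k) 0) / 2" for i j k l
  proof -
    have "wirt i (chern_Gamma_tilde G j k l) 0 = wirt i (\<lambda>z. Q l j k z + (Q l k j z - Q l j k z) / 2) 0"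
      unfolding tilde_eq
      by (rule wirt_local[OF _ oV V0]) (auto simp: GQ intro!: derivative_intros Qd)
    also have "\<dots> = wirt i (\<lambda>z. Q l j k z + (1/2) * (Q l k j z - Q l j k z)) 0"
      by (simp add: field_simps)
    also have "\<dots> = wirt i (Q l j k) 0 + wirt i (\<lambda>z. (1/2) * (Q l k j z - Q l j k z)) 0"
      by (rule wirt_add) (auto intro!: derivative_intros Qd)
    also have "\<dots> = wirt i (Q l j k) 0 + (1/2) * wirt i (\<lambda>z. Q l k j z - Q l j k z) 0"
      by (subst wirt_cmult) (auto intro!: derivative_intros Qd)
    also have "\<dots> = wirt i (Q l j k) 0 + (wirt i (Q l k j) 0 - wirt i (Q l j k) 0) / 2"
      by (subst wirt_diff) (auto intro!: Qd)
    finally show ?thesis .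
  qed
  have fin1: "(\<Sum>i\<in>UNIV. \<Sum>j\<in>UNIV. \<Sum>k\<in>UNIV. wirt i (chern_Gamma G j k l) 0 * X $ i * X $ j * X $ k) = 0" for l X
    using cubQ[of X l] by (simp add: cub_def wG mult.assoc)
  have fin2: "(\<Sum>i\<in>UNIV. \<Sum>j\<in>UNIV. \<Sum>k\<in>UNIV. wirt i (chern_Gamma_tilde G j k l) 0 * X $ i * X $ j * X $ k) = 0" for l X
  proof -
    have "(\<Sum>i\<in>UNIV. \<Sum>j\<in>UNIV. \<Sum>k\<in>UNIV. wirt i (chern_Gamma_tilde G j k l) 0 * X $ i * X $ j * X $ k)
       = cub X (\<lambda>i j k. wirt i (Q l j k) 0 + (1/2) * wirt i (Q l k j) 0 + (-1/2) * wirt i (Q l j k) 0)"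
      unfolding cub_def by (intro sum.cong refl) (simp add: wGt field_simps)
    also have "\<dots> = 0" unfolding cub_add cub_cmult cubQ cubQ2 by simp
    finally show ?thesis .
  qed
  show ?thesis
    apply (rule exI[of _ V], rule exI[of _ W], rule exI[of _ Fm])
    using oV oW V0 WU bij hol1 hol2 Fm0 wF tilde0 fin1 fin2 by (simp add: G_fun)
qed

end

theorem lemma5p2:
  fixes U :: "(complex^'n::finite) set"
    and h :: "complex^'n \<Rightarrow> complex^'n^'n"
    and p :: "complex^'n"
    and e :: "'n \<Rightarrow> complex^'n"
  assumes "open U" and "p \<in> U"
    and "hermitian_metric_on U h"
    and "invertible (\<chi> k i. e i $ k)"
  shows "\<exists>V W F. open V \<and> open W \<and> 0 \<in> V \<and> W \<subseteq> U \<and> bij_betw F V W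
           \<and> holo_on V F \<and> holo_on W (inv_into V F) \<and> F 0 = p
           \<and> (\<forall>i k. wirt i (\<lambda>w. F w $ k) 0 = e i $ k)
           \<and> (\<forall>i j k. chern_Gamma_tilde (pullback_metric F h) i j k 0 = 0)
           \<and> (\<forall>l (X::complex^'n).
                (\<Sum>i\<in>UNIV. \<Sum>j\<in>UNIV. \<Sum>k\<in>UNIV. wirt i (chern_Gamma_tilde (pullback_metric F h) j k l) 0
                                * X $ i * X $ j * X $ k) = 0
              \<and> (\<Sum>i\<in>UNIV. \<Sum>j\<in>UNIV. \<Sum>k\<in>UNIV. wirt i (chern_Gamma (pullback_metric F h) j k l) 0
                                * X $ i * X $ j * X $ k) = 0)"
proof -
  interpret LS U h p e using assms by unfold_locales
  show ?thesis by (rule main)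
qed

end
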